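(* Let $n$ be even and $m\le n$. Let $X\in\{0,1\}^{n\times m}$ follow the rank-one model with parameters $\mathbf u\in[c,C]^n$, $\mathbf v\in[c,C]^m$, and let $\hat{\mathbf u}=[\hat u_1,\dots,\hat u_n]^\top$ be the output of the split spectral estimator applied to $X$ and $\|\mathbf v\|$. Then for every $i\in\{1,\dots,n\}$ and every $0<\epsilon<1$, $$\Pr\big(|\hat u_i-u_i|>\epsilon\big)\le 3n\exp\!\left(-C_1\, m\,\epsilon^2\right).$$
   Context: Rank-one model: fix constants $0<c<C<1$. For vectors $\mathbf u\in[c,C]^n$ and $\mathbf v\in[c,C]^m$, a random matrix $X\in\{0,1\}^{n\times m}$ follows the rank-one model if its entries are independent with $X_{i,j}\sim\mathrm{Bernoulli}(u_iv_j)$, so $\mathbb E X=\mathbf u\mathbf v^\top$. The norm $\|\mathbf v\|$ (Euclidean) is assumed known. The leading right singular vector of a matrix with nonnegative entries is taken with sign chosen so that it has nonnegative inner product with $\mathbf v$. Split spectral estimator (Algorithm 1): given $X$ and $\|\mathbf v\|$, let $X_A$ be the first $n/2$ rows and $X_B$ the last $n/2$ rows of $X$. Let $\hat{\mathbf v}_A,\hat{\mathbf v}_B\in\mathbb R^m$ be leading right singular vectors of $X_A$ and $X_B$ respectively. Set $\hat{\mathbf u}_A=X_A\hat{\mathbf v}_B/(\|\hat{\mathbf v}_B\|\,\|\mathbf v\|)$ and $\hat{\mathbf u}_B=X_B\hat{\mathbf v}_A/(\|\hat{\mathbf v}_A\|\,\|\mathbf v\|)$, and output $\hat{\mathbf u}=\begin{bmatrix}\hat{\mathbf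 u}_A\\ \hat{\mathbf u}_B\end{bmatrix}$. Constants: $C_2=c^4/48$, $C_3=4/c^4+30\sqrt2$, $C_4=c^2\min(1/18,\,C_2/9)$, $C_1=\min\big(C_4,(6C_3/c)^{-2}\big)$. *)

theory Defs
  imports "HOL-Probability.Probability"
begin

text \<open>Vectors in R^k are represented as functions nat => real, only indices below k matter.
  A k x m matrix is a function nat => nat => real (row index, column index).\<close>

definition vinner :: "nat \<Rightarrow> (nat \<Rightarrow> real) \<Rightarrow> (nat \<Rightarrow> real) \<Rightarrow> real" where
  "vinner k x y = (\<Sum>j<k. x j * y j)"

definition vnorm :: "nat \<Rightarrow> (nat \<Rightarrow> real) \<Rightarrow> real" where
  "vnorm k x = sqrt (\<Sum>j<k. (x j)\<^sup>2)"

definition matvec :: "nat \<Rightarrow> (nat \<Rightarrow> nat \<Rightarrow> real) \<Rightarrow> (nat \<Rightarrow> real) \<Rightarrow> (nat \<Rightarrow> real)" where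
  "matvec m M x = (\<lambda>i. \<Sum>j<m. M i j * x j)"

definition leading_rsv ::
  "nat \<Rightarrow> nat \<Rightarrow> (nat \<Rightarrow> nat \<Rightarrow> real) \<Rightarrow> (nat \<Rightarrow> real) \<Rightarrow> (nat \<Rightarrow> real) \<Rightarrow> bool" where
  "leading_rsv k m M v w \<longleftrightarrow>
     vnorm m w = 1 \<and>
     (\<forall>x. vnorm m x = 1 \<longrightarrow> vnorm k (matvec m M x) \<le> vnorm k (matvec m M w)) \<and>
     vinner m w v \<ge> 0"

definition rank_one_model :: "nat \<Rightarrow> nat \<Rightarrow> (nat \<Rightarrow> real) \<Rightarrow> (nat \<Rightarrow> real) \<Rightarrow> (nat \<times> nat \<Rightarrow> bool) pmf" where
  "rank_one_model n m u v = Pi_pmf ({..<n} \<times> {..<m}) False (\<lambda>(i, j). bernoulli_pmf (u i * v j))"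

definition to_real_mat :: "(nat \<times> nat \<Rightarrow> bool) \<Rightarrow> nat \<Rightarrow> nat \<Rightarrow> real" where
  "to_real_mat X i j = (if X (i, j) then 1 else 0)"

definition top_half :: "nat \<Rightarrow> (nat \<times> nat \<Rightarrow> bool) \<Rightarrow> nat \<Rightarrow> nat \<Rightarrow> real" where
  "top_half n X i j = to_real_mat X i j"

definition bot_half :: "nat \<Rightarrow> (nat \<times> nat \<Rightarrow> bool) \<Rightarrow> nat \<Rightarrow> nat \<Rightarrow> real" where
  "bot_half n X i j = to_real_mat X (n div 2 + i) j"

text \<open>Split spectral estimator (Algorithm 1), given choices selA, selB of the leading right
  singular vectors of X_A and X_B and the known norm nv = ||v||. Output indexed 0..n-1.\<close>
definition split_spectral ::
  "nat \<Rightarrow> nat \<Rightarrow> ((nat \<Rightarrow> nat \<Rightarrow> real) \<Rightarrow> (nat \<Rightarrow> real)) \<Rightarrow> ((nat \<Rightarrow> nat \<Rightarrow> real) \<Rightarrow> (nat \<Rightarrow> real))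
     \<Rightarrow> real \<Rightarrow> (nat \<times> nat \<Rightarrow> bool) \<Rightarrow> nat \<Rightarrow> real" where
  "split_spectral n m selA selB nv X =
     (let XA = top_half n X; XB = bot_half n X;
          vA = selA XA; vB = selB XB
      in (\<lambda>i. if i < n div 2 then matvec m XA vB i / (vnorm m vB * nv)
              else matvec m XB vA (i - n div 2) / (vnorm m vA * nv)))"

definition C2 :: "real \<Rightarrow> real" where "C2 c = c ^ 4 / 48"
definition C3 :: "real \<Rightarrow> real" where "C3 c = 4 / c ^ 4 + 30 * sqrt 2"
definition C4 :: "real \<Rightarrow> real" where "C4 c = c\<^sup>2 * min (1/18) (C2 c / 9)"
definition C1 :: "real \<Rightarrow> real" where "C1 c = min (C4 c) ((6 * C3 c / c) powr (-2))"

end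

theory Submission
  imports Defs
begin


definition ind :: "bool \<Rightarrow> real" where "ind b = (if b then 1 else 0)"

lemma prob_pair_le:
  fixes p :: "'a pmf" and q :: "'b pmf"
  assumes "\<And>f. measure_pmf.prob q {g. (f,g) \<in> S} \<le> r"
  shows "measure_pmf.prob (pair_pmf p q) S \<le> r"
proof -
  have r0: "r \<ge> 0" using assms[of undefined] by (meson measure_nonneg order_trans)
  have "emeasure (measure_pmf (pair_pmf p q)) S = (\<integral>\<^sup>+f. emeasure (measure_pmf (map_pmf (Pair f) q)) S \<partial>measure_pmf p)"
    unfolding pair_pmf_def by (simp add: map_pmf_def[symmetric])
  also have "\<dots> \<le> (\<integral>\<^sup>+f. ennreal r \<partial>measure_pmf p)"
  proof (intro nn_integral_mono)
    fix f
    have "emeasure (measure_pmf (map_pmf (Pair f) q)) S = emeasure (measure_pmf q) {g. (f,g) \<in> S}"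
      by (simp add: vimage_def)
    also have "\<dots> = ennreal (measure_pmf.prob q {g. (f,g) \<in> S})"
      by (simp add: measure_pmf.emeasure_eq_measure)
    also have "\<dots> \<le> ennreal r" using assms ennreal_leI by blast
    finally show "emeasure (measure_pmf (map_pmf (Pair f) q)) S \<le> ennreal r" .
  qed
  also have "\<dots> = ennreal r" by simp
  finally show ?thesis using r0
    by (simp add: measure_pmf.emeasure_eq_measure)
qed

lemma hoeff_pi:
  fixes F :: "'a \<Rightarrow> bool pmf" and \<alpha> \<beta> :: "'k \<Rightarrow> 'a" and w :: "'k \<Rightarrow> real"
  assumes fin: "finite I" "finite L" and ab: "\<And>k. k \<in> L \<Longrightarrow> \<alpha> k \<in> I \<and> \<beta> k \<in> I"
    and disj: "\<And>k k'. k \<in> L \<Longrightarrow> k' \<in> L \<Longrightarrow> k \<noteq> k' \<Longrightarrow> {\<alpha> k, \<beta> k} \<inter> {\<alpha> k', \<beta> k'} = {}"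
    and pos: "(\<Sum>k\<in>L. (w k)\<^sup>2) > 0" and t: "t \<ge> 0"
  shows "measure_pmf.prob (Pi_pmf I False F)
     {X. \<bar>(\<Sum>k\<in>L. w k * ind (X (\<alpha> k) \<and> X (\<beta> k))) -
          (\<Sum>k\<in>L. w k * measure_pmf.prob (Pi_pmf I False F) {X. X (\<alpha> k) \<and> X (\<beta> k)})\<bar> \<ge> t}
     \<le> 2 * exp (-2 * t\<^sup>2 / (\<Sum>k\<in>L. (w k)\<^sup>2))"
proof -
  define P where "P = Pi_pmf I False F"
  define K where "K = (\<lambda>k. {\<alpha> k, \<beta> k})"
  define Y where "Y = (\<lambda>k (X::'a \<Rightarrow> bool). w k * ind (X (\<alpha> k) \<and> X (\<beta> k)))"
  have ind0: "prob_space.indep_vars (measure_pmf P) (\<lambda>_. count_space UNIV) (\<lambda>x f. f x) I"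
    unfolding P_def by (rule indep_vars_Pi_pmf[OF fin(1)])
  have ind1: "prob_space.indep_vars (measure_pmf P) (\<lambda>k. PiM (K k) (\<lambda>_. count_space UNIV))
       (\<lambda>k \<omega>. restrict (\<lambda>i. \<omega> i) (K k)) L"
    apply (rule prob_space.indep_vars_restrict[OF measure_pmf.prob_space_axioms ind0])
    using ab disj by (auto simp: K_def disjoint_family_on_def)
  have ind2: "prob_space.indep_vars (measure_pmf P) (\<lambda>_. borel)
       (\<lambda>k \<omega>. (\<lambda>r. w k * ind (r (\<alpha> k) \<and> r (\<beta> k))) (restrict (\<lambda>i. \<omega> i) (K k))) L"
    apply (rule prob_space.indep_vars_compose2[OF measure_pmf.prob_space_axioms ind1])
    unfolding ind_def K_def by measurable
  have ind3: "prob_space.indep_vars (measure_pmf P) (\<lambda>_. borel) Y L"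
    apply (rule prob_space.indep_vars_cong[OF measure_pmf.prob_space_axioms, THEN iffD1, OF _ _ _ ind2])
    by (auto simp: Y_def K_def)
  have AE: "AE x in measure_pmf P. Y k x \<in> {min 0 (w k)..max 0 (w k)}" for k
    by (auto simp: Y_def ind_def)
  interpret H: Hoeffding_ineq "measure_pmf P" L Y "\<lambda>k. min 0 (w k)" "\<lambda>k. max 0 (w k)"
      "\<Sum>k\<in>L. measure_pmf.expectation P (Y k)"
    by unfold_locales (use fin ind3 AE in auto)
  have wid: "(\<Sum>k\<in>L. (max 0 (w k) - min 0 (w k))\<^sup>2) = (\<Sum>k\<in>L. (w k)\<^sup>2)"
    by (intro sum.cong) (auto simp: max_def min_def power2_eq_square)
  have ex: "measure_pmf.expectation P (Y k) = w k * measure_pmf.prob P {X. X (\<alpha> k) \<and> X (\<beta> k)}" for k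
  proof -
    have "Y k = (\<lambda>X. w k * indicator {X. X (\<alpha> k) \<and> X (\<beta> k)} X)"
      by (auto simp: Y_def ind_def fun_eq_iff indicator_def)
    thus ?thesis by simp
  qed
  have "measure_pmf.prob P {x \<in> space (measure_pmf P). \<bar>(\<Sum>k\<in>L. Y k x) - (\<Sum>k\<in>L. measure_pmf.expectation P (Y k))\<bar> \<ge> t}
     \<le> 2 * exp (-2 * t\<^sup>2 / (\<Sum>k\<in>L. (max 0 (w k) - min 0 (w k))\<^sup>2))"
    by (rule H.Hoeffding_ineq_abs_ge[OF t]) (use wid pos in simp)
  thus ?thesis unfolding wid ex by (simp add: Y_def P_def)
qed



lemma sq_sum_expand:
  fixes M :: "nat \<Rightarrow> nat \<Rightarrow> real"
  shows "(\<Sum>k<h. (\<Sum>j<m. M k j * x j)\<^sup>2) = (\<Sum>j<m. \<Sum>l<m. (\<Sum>k<h. M k j * M k l) * x j * x l)"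
proof -
  have "(\<Sum>k<h. (\<Sum>j<m. M k j * x j)\<^sup>2) = (\<Sum>k<h. \<Sum>j<m. \<Sum>l<m. M k j * x j * (M k l * x l))"
    by (simp add: power2_eq_square sum_product)
  also have "\<dots> = (\<Sum>j<m. \<Sum>k<h. \<Sum>l<m. M k j * x j * (M k l * x l))"
    by (rule sum.swap[where A="{..<h}" and B="{..<m}"])
  also have "\<dots> = (\<Sum>j<m. \<Sum>l<m. \<Sum>k<h. M k j * x j * (M k l * x l))"
    by (rule sum.cong[OF refl]) (rule sum.swap[where A="{..<h}" and B="{..<m}"])
  also have "\<dots> = (\<Sum>j<m. \<Sum>l<m. (\<Sum>k<h. M k j * M k l) * x j * x l)"
    by (simp add: sum_distrib_left sum_distrib_right mult_ac)
  finally show ?thesis .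
qed

lemma abs_sum_le_sq:
  fixes x :: "nat \<Rightarrow> real"
  shows "(\<Sum>j<m. \<bar>x j\<bar>)\<^sup>2 \<le> real m * (\<Sum>j<m. (x j)\<^sup>2)"
  using Cauchy_Schwarz_ineq_sum[of "\<lambda>_. 1::real" "\<lambda>j. \<bar>x j\<bar>" "{..<m}"] by simp

lemma quad_bounds:
  fixes M :: "nat \<Rightarrow> nat \<Rightarrow> real" and q v x :: "nat \<Rightarrow> real"
  assumes G: "\<And>j l. j<m \<Longrightarrow> l<m \<Longrightarrow> \<bar>(\<Sum>k<h. M k j * M k l) - (\<Sum>k<h. if j = l then q k * v j else q k * v j * (q k * v l))\<bar> \<le> s"
  and s0: "s \<ge> 0"
  and qv: "\<And>k j. k<h \<Longrightarrow> j<m \<Longrightarrow> 0 \<le> q k * v j \<and> q k * v j \<le> 1"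
  shows "(\<Sum>k<h. (\<Sum>j<m. M k j * x j)\<^sup>2) \<le> (\<Sum>k<h. (q k)\<^sup>2) * (\<Sum>j<m. v j * x j)\<^sup>2 + (real h + real m * s) * (\<Sum>j<m. (x j)\<^sup>2)"
    and "(\<Sum>k<h. (\<Sum>j<m. M k j * x j)\<^sup>2) \<ge> (\<Sum>k<h. (q k)\<^sup>2) * (\<Sum>j<m. v j * x j)\<^sup>2 - real m * s * (\<Sum>j<m. (x j)\<^sup>2)"
proof -
  define G where "G j l = (\<Sum>k<h. M k j * M k l)" for j l
  define \<mu> where "\<mu> j l = (\<Sum>k<h. if j = l then q k * v j else q k * v j * (q k * v l))" for j l
  define d where "d j = (\<Sum>k<h. q k * v j - (q k * v j)\<^sup>2)" for j
  define U where "U = (\<Sum>k<h. (q k)\<^sup>2)"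
  have mu: "\<mu> j l = U * v j * v l + (if j = l then d j else 0)" for j l
  proof -
    have U': "(\<Sum>k<h. q k * v j * (q k * v l)) = U * v j * v l" for j l
      unfolding U_def by (simp add: sum_distrib_left power2_eq_square mult_ac)
    show ?thesis
    proof (cases "j = l")
      case True
      have "\<mu> j l = (\<Sum>k<h. q k * v j * (q k * v j) + (q k * v j - (q k * v j)\<^sup>2))"
        using True by (simp add: \<mu>_def power2_eq_square)
      also have "\<dots> = U * v j * v l + d j"
        using True by (simp add: sum.distrib U' d_def)
      finally show ?thesis using True by simp
    next
      case False
      thus ?thesis by (simp add: \<mu>_def U')
    qed
  qed
  have e1: "(\<Sum>k<h. (\<Sum>j<m. M k j * x j)\<^sup>2) = (\<Sum>j<m. \<Sum>l<m. G j l * x j * x l)"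
    unfolding G_def by (rule sq_sum_expand)
  have e2: "(\<Sum>j<m. \<Sum>l<m. \<mu> j l * x j * x l) = U * (\<Sum>j<m. v j * x j)\<^sup>2 + (\<Sum>j<m. d j * (x j)\<^sup>2)"
  proof -
    have "(\<Sum>j<m. \<Sum>l<m. \<mu> j l * x j * x l) = (\<Sum>j<m. \<Sum>l<m. U * (v j * x j) * (v l * x l)) + (\<Sum>j<m. \<Sum>l<m. (if j = l then d j else 0) * x j * x l)"
      by (simp add: mu sum.distrib algebra_simps)
    also have "(\<Sum>j<m. \<Sum>l<m. U * (v j * x j) * (v l * x l)) = U * (\<Sum>j<m. v j * x j)\<^sup>2"
      by (simp add: power2_eq_square sum_product sum_distrib_left mult_ac)
    also have "(\<Sum>j<m. \<Sum>l<m. (if j = l then d j else 0) * x j * x l) = (\<Sum>j<m. d j * (x j)\<^sup>2)"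
    proof (rule sum.cong[OF refl])
      fix j assume "j \<in> {..<m}"
      have "(\<Sum>l<m. (if j = l then d j else 0) * x j * x l) = (\<Sum>l<m. if l = j then d j * x j * x l else 0)"
        by (intro sum.cong) auto
      also have "\<dots> = d j * (x j)\<^sup>2" using \<open>j \<in> {..<m}\<close> by (simp add: power2_eq_square)
      finally show "(\<Sum>l<m. (if j = l then d j else 0) * x j * x l) = d j * (x j)\<^sup>2" .
    qed
    finally show ?thesis .
  qed
  have e3: "\<bar>(\<Sum>j<m. \<Sum>l<m. G j l * x j * x l) - (\<Sum>j<m. \<Sum>l<m. \<mu> j l * x j * x l)\<bar> \<le> real m * s * (\<Sum>j<m. (x j)\<^sup>2)"
  proof -
    have "\<bar>(\<Sum>j<m. \<Sum>l<m. G j l * x j * x l) - (\<Sum>j<m. \<Sum>l<m. \<mu> j l * x j * x l)\<bar>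
        = \<bar>\<Sum>j<m. \<Sum>l<m. (G j l - \<mu> j l) * x j * x l\<bar>"
      by (simp add: sum_subtractf algebra_simps)
    also have "\<dots> \<le> (\<Sum>j<m. \<Sum>l<m. \<bar>(G j l - \<mu> j l) * x j * x l\<bar>)"
      by (rule order_trans[OF sum_abs], intro sum_mono sum_abs)
    also have "\<dots> \<le> (\<Sum>j<m. \<Sum>l<m. s * \<bar>x j\<bar> * \<bar>x l\<bar>)"
      by (intro sum_mono) (use G in \<open>auto simp: abs_mult G_def \<mu>_def intro!: mult_right_mono\<close>)
    also have "\<dots> = s * (\<Sum>j<m. \<bar>x j\<bar>)\<^sup>2"
      by (simp add: power2_eq_square sum_product sum_distrib_left mult_ac)
    also have "\<dots> \<le> s * (m * (\<Sum>j<m. (x j)\<^sup>2))"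
      by (intro mult_left_mono abs_sum_le_sq s0)
    finally show ?thesis by (simp add: mult_ac)
  qed
  have dj: "0 \<le> d j" if "j < m" for j
    unfolding d_def
  proof (intro sum_nonneg)
    fix k assume "k \<in> {..<h}"
    hence "q k * v j * (q k * v j) \<le> q k * v j" using qv[of k j] that by (simp add: mult_left_le)
    thus "0 \<le> q k * v j - (q k * v j)\<^sup>2" by (simp add: power2_eq_square)
  qed
  have d0: "0 \<le> (\<Sum>j<m. d j * (x j)\<^sup>2)"
    by (intro sum_nonneg mult_nonneg_nonneg) (auto intro: dj)
  have d1: "(\<Sum>j<m. d j * (x j)\<^sup>2) \<le> real h * (\<Sum>j<m. (x j)\<^sup>2)"
  proof -
    have "d j \<le> real h" if "j < m" for j
    proof -
      have "d j \<le> (\<Sum>k<h. 1)" unfolding d_def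
      proof (intro sum_mono)
        fix k assume "k \<in> {..<h}"
        then have "0 \<le> q k * v j" "q k * v j \<le> 1" using qv that by auto
        then show "q k * v j - (q k * v j)\<^sup>2 \<le> 1" by (simp add: power2_eq_square) (smt (verit) mult_nonneg_nonneg)
      qed
      thus ?thesis by simp
    qed
    thus ?thesis by (auto simp: sum_distrib_left intro!: sum_mono mult_right_mono)
  qed
  show "(\<Sum>k<h. (\<Sum>j<m. M k j * x j)\<^sup>2) \<le> (\<Sum>k<h. (q k)\<^sup>2) * (\<Sum>j<m. v j * x j)\<^sup>2 + (real h + real m * s) * (\<Sum>j<m. (x j)\<^sup>2)"
    using e1 e2 e3 d1 unfolding U_def by (simp add: algebra_simps abs_le_iff)
  show "(\<Sum>k<h. (\<Sum>j<m. M k j * x j)\<^sup>2) \<ge> (\<Sum>k<h. (q k)\<^sup>2) * (\<Sum>j<m. v j * x j)\<^sup>2 - real m * s * (\<Sum>j<m. (x j)\<^sup>2)"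
    using e1 e2 e3 d0 unfolding U_def by (simp add: algebra_simps abs_le_iff)
qed



definition Qf :: "nat \<Rightarrow> nat \<Rightarrow> (nat \<Rightarrow> nat \<Rightarrow> real) \<Rightarrow> (nat \<Rightarrow> real) \<Rightarrow> real" where
  "Qf h m M x = (\<Sum>k<h. (\<Sum>j<m. M k j * x j)\<^sup>2)"
definition sq :: "nat \<Rightarrow> (nat \<Rightarrow> real) \<Rightarrow> real" where
  "sq m x = (\<Sum>j<m. (x j)\<^sup>2)"

lemma sq_nonneg: "sq m x \<ge> 0" unfolding sq_def by (intro sum_nonneg) auto
lemma Qf_nonneg: "Qf h m M x \<ge> 0" unfolding Qf_def by (intro sum_nonneg) auto

lemma leading_rsv_D:
  assumes "leading_rsv h m M v y"
  shows "sq m y = 1" "\<And>x. sq m x = 1 \<Longrightarrow> Qf h m M x \<le> Qf h m M y" "vinner m v y \<ge> 0"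
proof -
  have e: "vnorm k z = sqrt (sq k z)" for k z unfolding vnorm_def sq_def ..
  have e2: "vnorm h (matvec m M x) = sqrt (Qf h m M x)" for x unfolding vnorm_def Qf_def matvec_def ..
  show "sq m y = 1" using assms unfolding leading_rsv_def e by simp
  show "Qf h m M x \<le> Qf h m M y" if "sq m x = 1" for x
  proof -
    have e3: "sq h (matvec m M z) = Qf h m M z" for z by (simp add: sq_def Qf_def matvec_def)
    show ?thesis using assms that unfolding leading_rsv_def e e3 by simp
  qed
  show "vinner m v y \<ge> 0" using assms unfolding leading_rsv_def vinner_def by (simp add: mult.commute)
qed

lemma lin_aux:
  fixes p q :: "nat \<Rightarrow> real"
  shows "(\<Sum>j\<in>A. (a*p j + b*q j)\<^sup>2) + (\<Sum>j\<in>A. (b*p j - a*q j)\<^sup>2) = (a\<^sup>2+b\<^sup>2)*((\<Sum>j\<in>A. (p j)\<^sup>2) + (\<Sum>j\<in>A. (q j)\<^sup>2))"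
proof -
  have "(\<Sum>j\<in>A. (a*p j + b*q j)\<^sup>2) + (\<Sum>j\<in>A. (b*p j - a*q j)\<^sup>2) = (\<Sum>j\<in>A. (a*p j + b*q j)\<^sup>2 + (b*p j - a*q j)\<^sup>2)"
    by (simp add: sum.distrib)
  also have "\<dots> = (\<Sum>j\<in>A. (a\<^sup>2+b\<^sup>2) * ((p j)\<^sup>2 + (q j)\<^sup>2))"
    by (intro sum.cong refl) (simp add: power2_eq_square algebra_simps)
  also have "\<dots> = (a\<^sup>2+b\<^sup>2)*((\<Sum>j\<in>A. (p j)\<^sup>2) + (\<Sum>j\<in>A. (q j)\<^sup>2))"
    by (simp add: sum_distrib_left[symmetric] sum.distrib)
  finally show ?thesis .
qed

lemma Qf_lin: "Qf h m M (\<lambda>j. a * y1 j + b * y2 j) + Qf h m M (\<lambda>j. b * y1 j - a * y2 j)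
   = (a\<^sup>2 + b\<^sup>2) * (Qf h m M y1 + Qf h m M y2)"
proof -
  have l1: "(\<Sum>j<m. M k j * (a * y1 j + b * y2 j)) = a * (\<Sum>j<m. M k j * y1 j) + b * (\<Sum>j<m. M k j * y2 j)" for k
    by (simp add: sum.distrib sum_distrib_left algebra_simps)
  have l2: "(\<Sum>j<m. M k j * (b * y1 j - a * y2 j)) = b * (\<Sum>j<m. M k j * y1 j) - a * (\<Sum>j<m. M k j * y2 j)" for k
    by (simp add: sum_subtractf sum_distrib_left algebra_simps)
  show ?thesis unfolding Qf_def l1 l2 by (rule lin_aux)
qed

lemma sq_lin: "sq m (\<lambda>j. a * y1 j + b * y2 j) + sq m (\<lambda>j. b * y1 j - a * y2 j)
   = (a\<^sup>2 + b\<^sup>2) * (sq m y1 + sq m y2)"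
  unfolding sq_def by (rule lin_aux)

lemma Qf_scale: "Qf h m M (\<lambda>j. a * x j) = a\<^sup>2 * Qf h m M x"
  unfolding Qf_def by (simp add: sum_distrib_left power2_eq_square algebra_simps)
lemma sq_scale: "sq m (\<lambda>j. a * x j) = a\<^sup>2 * sq m x"
  unfolding sq_def by (simp add: sum_distrib_left power2_eq_square algebra_simps)

lemma Qf_zero: assumes "sq m x = 0" shows "Qf h m M x = 0"
proof -
  have "\<forall>j\<in>{..<m}. (x j)\<^sup>2 = 0" using assms unfolding sq_def
    by (subst sum_nonneg_eq_0_iff[symmetric]) auto
  hence "\<And>j. j < m \<Longrightarrow> x j = 0" by auto
  thus ?thesis unfolding Qf_def by simp
qed

lemma max_hom:
  assumes y: "sq m y = 1" "\<And>x. sq m x = 1 \<Longrightarrow> Qf h m M x \<le> Qf h m M y"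
  shows "Qf h m M x \<le> Qf h m M y * sq m x"
proof (cases "sq m x = 0")
  case True thus ?thesis using Qf_zero by simp
next
  case False
  hence p: "sq m x > 0" using sq_nonneg[of m x] by simp
  define a where "a = 1 / sqrt (sq m x)"
  have "sq m (\<lambda>j. a * x j) = a\<^sup>2 * sq m x" by (rule sq_scale)
  also have "\<dots> = 1" using p by (simp add: a_def power_divide)
  finally have "sq m (\<lambda>j. a * x j) = 1" .
  hence "Qf h m M (\<lambda>j. a * x j) \<le> Qf h m M y" by (rule y(2))
  moreover have "Qf h m M (\<lambda>j. a * x j) = a\<^sup>2 * Qf h m M x" by (rule Qf_scale)
  ultimately have "Qf h m M x / sq m x \<le> Qf h m M y" using p by (simp add: a_def power_divide)
  thus ?thesis using p by (simp add: divide_le_eq)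
qed



locale gram =
  fixes h m :: nat and M :: "nat \<Rightarrow> nat \<Rightarrow> real" and q v :: "nat \<Rightarrow> real" and s :: real
  assumes G: "\<And>j l. j<m \<Longrightarrow> l<m \<Longrightarrow> \<bar>(\<Sum>k<h. M k j * M k l) - (\<Sum>k<h. if j = l then q k * v j else q k * v j * (q k * v l))\<bar> \<le> s"
  and s0: "s \<ge> 0"
  and qv: "\<And>k j. k<h \<Longrightarrow> j<m \<Longrightarrow> 0 \<le> q k * v j \<and> q k * v j \<le> 1"
  and Vpos: "sq m v > 0"
begin

definition "U = (\<Sum>k<h. (q k)\<^sup>2)"

lemma upper: "Qf h m M x \<le> U * (vinner m v x)\<^sup>2 + (real h + real m * s) * sq m x"
  using quad_bounds(1)[OF G s0 qv, where x=x] unfolding Qf_def U_def vinner_def sq_def by simp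
lemma lower: "Qf h m M x \<ge> U * (vinner m v x)\<^sup>2 - real m * s * sq m x"
  using quad_bounds(2)[OF G s0 qv, where x=x] unfolding Qf_def U_def vinner_def sq_def by simp

lemma cos_lb:
  assumes y: "sq m y = 1" "\<And>x. sq m x = 1 \<Longrightarrow> Qf h m M x \<le> Qf h m M y"
  shows "U * (vinner m v y)\<^sup>2 \<ge> U * sq m v - real h - 2 * real m * s"
proof -
  define w where "w j = v j / sqrt (sq m v)" for j
  have sw: "sq m w = 1" unfolding w_def using sq_scale[of m "1/sqrt (sq m v)" v] Vpos
    by (simp add: power_divide)
  have vw: "vinner m v w = sqrt (sq m v)" unfolding w_def vinner_def
    using Vpos by (simp add: sum_divide_distrib[symmetric] sq_def power2_eq_square real_div_sqrt)
  have "U * sq m v - real m * s \<le> Qf h m M w" using lower[of w] vw sw Vpos by simp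
  also have "\<dots> \<le> Qf h m M y" by (rule y(2)[OF sw])
  also have "\<dots> \<le> U * (vinner m v y)\<^sup>2 + (real h + real m * s)" using upper[of y] y(1) by simp
  finally show ?thesis by linarith
qed

lemma uniq:
  assumes K: "U * sq m v - real h - 2 * real m * s > 0"
    and y1: "leading_rsv h m M v y1" and y2: "leading_rsv h m M v y2"
  shows "\<And>j. j < m \<Longrightarrow> y1 j = y2 j"
proof -
  note d1 = leading_rsv_D[OF y1] and d2 = leading_rsv_D[OF y2]
  have Q12: "Qf h m M y1 = Qf h m M y2" using d1(2)[OF d2(1)] d2(2)[OF d1(1)] by simp
  define lam where "lam = Qf h m M y1"
  have hom: "Qf h m M x \<le> lam * sq m x" for x using max_hom[OF d1(1,2)] lam_def by simp
  have U0: "U \<ge> 0" unfolding U_def by (intro sum_nonneg) auto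
  have c1: "U * (vinner m v y1)\<^sup>2 > 0" using cos_lb[OF d1(1,2)] K by linarith
  have c2: "U * (vinner m v y2)\<^sup>2 > 0" using cos_lb[OF d2(1,2)] K by linarith
  have p1: "vinner m v y1 > 0" using c1 d1(3) by (cases "vinner m v y1 = 0") auto
  have p2: "vinner m v y2 > 0" using c2 d2(3) by (cases "vinner m v y2 = 0") auto
  define a where "a = vinner m v y2"
  define b where "b = - vinner m v y1"
  define z1 where "z1 j = a * y1 j + b * y2 j" for j
  define z2 where "z2 j = b * y1 j - a * y2 j" for j
  have "Qf h m M z1 + Qf h m M z2 = (a\<^sup>2 + b\<^sup>2) * (2 * lam)"
    unfolding z1_def z2_def Qf_lin lam_def Q12 by simp
  also have "\<dots> = lam * (sq m z1 + sq m z2)"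
    unfolding z1_def z2_def sq_lin d1(1) d2(1) by simp
  finally have eq: "Qf h m M z1 + Qf h m M z2 = lam * sq m z1 + lam * sq m z2" by (simp add: algebra_simps)
  have Qz1: "Qf h m M z1 = lam * sq m z1" using eq hom[of z1] hom[of z2] by linarith
  have "vinner m v z1 = a * vinner m v y1 + b * vinner m v y2"
    unfolding z1_def vinner_def by (simp add: sum.distrib sum_distrib_left algebra_simps)
  hence vz1: "vinner m v z1 = 0" unfolding a_def b_def by simp
  have lamb: "lam \<ge> U * sq m v - real m * s"
  proof -
    have "U * (vinner m v y1)\<^sup>2 \<le> U * sq m v"
    proof -
      have "(vinner m v y1)\<^sup>2 \<le> sq m v * sq m y1"
        unfolding vinner_def sq_def by (rule Cauchy_Schwarz_ineq_sum)
      thus ?thesis using d1(1) U0 by (simp add: mult_left_mono)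
    qed
    moreover have "lam \<le> U * (vinner m v y1)\<^sup>2 + (real h + real m * s)"
      using upper[of y1] d1(1) lam_def by simp
    moreover have "lam \<ge> U * sq m v - real m * s"
    proof -
      define w where "w j = v j / sqrt (sq m v)" for j
      have sw: "sq m w = 1" unfolding w_def using sq_scale[of m "1/sqrt (sq m v)" v] Vpos
        by (simp add: power_divide)
      have vw: "vinner m v w = sqrt (sq m v)" unfolding w_def vinner_def
        using Vpos by (simp add: sum_divide_distrib[symmetric] sq_def power2_eq_square real_div_sqrt)
      have "U * sq m v - real m * s \<le> Qf h m M w" using lower[of w] vw sw Vpos by simp
      also have "\<dots> \<le> lam" unfolding lam_def by (rule d1(2)[OF sw])
      finally show ?thesis .
    qed
    ultimately show ?thesis by simp
  qed
  have "lam * sq m z1 \<le> (real h + real m * s) * sq m z1"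
    using upper[of z1] vz1 Qz1 by simp
  hence "(lam - (real h + real m * s)) * sq m z1 \<le> 0" by (simp add: algebra_simps)
  moreover have "lam - (real h + real m * s) > 0" using lamb K by linarith
  ultimately have "sq m z1 \<le> 0" by (simp add: mult_le_0_iff)
  hence sz: "sq m z1 = 0" using sq_nonneg[of m z1] by simp
  have z0: "z1 j = 0" if "j < m" for j
  proof -
    have "\<forall>j\<in>{..<m}. (z1 j)\<^sup>2 = 0" using sz unfolding sq_def
      by (subst sum_nonneg_eq_0_iff[symmetric]) auto
    thus ?thesis using that by auto
  qed
  hence rel: "a * y1 j = - b * y2 j" if "j < m" for j using that unfolding z1_def by (simp add: add_eq_0_iff)
  have "a\<^sup>2 * sq m y1 = b\<^sup>2 * sq m y2"
    unfolding sq_scale[symmetric] by (simp add: sq_def rel power2_eq_square)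
  hence "a\<^sup>2 = b\<^sup>2" using d1(1) d2(1) by simp
  hence ab: "a = - b" using p1 p2 unfolding a_def b_def by (simp add: power2_eq_iff)
  show "y1 j = y2 j" if "j < m" for j
    using rel[OF that] ab p2 unfolding a_def by simp
qed

end



lemma prob_pair_coords:
  fixes F :: "'a \<Rightarrow> bool pmf"
  assumes fin: "finite I" and ab: "a \<in> I" "b \<in> I"
  shows "measure_pmf.prob (Pi_pmf I False F) {X. X a \<and> X b}
       = (if a = b then pmf (F a) True else pmf (F a) True * pmf (F b) True)"
proof -
  define B where "B x = (if x = a \<or> x = b then {True} else UNIV)" for x
  have "{X. X a \<and> X b} = Pi I B" using ab by (auto simp: B_def Pi_def)
  hence "measure_pmf.prob (Pi_pmf I False F) {X. X a \<and> X b} = (\<Prod>x\<in>I. measure_pmf.prob (F x) (B x))"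
    using measure_Pi_pmf_Pi[OF fin] by simp
  also have "\<dots> = (\<Prod>x\<in>I. if x \<in> {a,b} then pmf (F x) True else 1)"
    by (intro prod.cong refl) (auto simp: B_def measure_pmf_single)
  also have "\<dots> = (\<Prod>x\<in>I \<inter> {a,b}. pmf (F x) True)"
  proof -
    have "{x. x = a \<or> x = b} = {a,b}" by auto
    thus ?thesis using fin by (simp add: prod.If_cases)
  qed
  also have "I \<inter> {a,b} = {a,b}" using ab by auto
  finally show ?thesis by auto
qed

lemma leading_rsv_cong:
  assumes "\<And>k j. k < h \<Longrightarrow> j < m \<Longrightarrow> M k j = M' k j"
  shows "leading_rsv h m M v w = leading_rsv h m M' v w"
proof -
  have "vnorm h (matvec m M x) = vnorm h (matvec m M' x)" for x
    unfolding vnorm_def matvec_def using assms by simp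
  thus ?thesis unfolding leading_rsv_def by simp
qed



locale setting =
  fixes n h m :: nat and c :: real and u v :: "nat \<Rightarrow> real"
    and sel :: "(nat \<Rightarrow> nat \<Rightarrow> real) \<Rightarrow> (nat \<Rightarrow> real)" and os i :: nat and \<epsilon> :: real
  assumes n: "n = 2*h" and m1: "1 \<le> m" and mn: "m \<le> n" and c0: "0 < c"
    and u: "\<And>k. k<n \<Longrightarrow> c \<le> u k \<and> u k \<le> 1" and v: "\<And>j. j<m \<Longrightarrow> c \<le> v j \<and> v j \<le> 1"
    and sel: "\<And>M. leading_rsv h m M v (sel M)" and os: "os + h \<le> n"
    and i: "i < n" "i < os \<or> os + h \<le> i"
    and eps: "0 < \<epsilon>" "\<epsilon> < 1" and reg: "4 \<le> real m * \<epsilon> * c^4"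
begin

definition "I = {..<n} \<times> {..<m}"
definition "F = (\<lambda>(a,b). bernoulli_pmf (u a * v b))"
definition "P = Pi_pmf I False F"
definition "s = \<epsilon> * real h * c^4 / 8"
definition "Oth = {os..<os+h} \<times> {..<m}"
definition "blk X = (\<lambda>k j. to_real_mat X (os+k) j)"
definition "yy X = sel (blk X)"
definition "yt X = sel (blk (\<lambda>x. if x \<in> Oth then X x else False))"
definition "\<mu> j l = (\<Sum>k<h. measure_pmf.prob P {X. X (os+k,j) \<and> X (os+k,l)})"
definition "Gm X j l = (\<Sum>k<h. ind (X (os+k,j) \<and> X (os+k,l)))"
definition "Bad = {X. \<exists>j<m. \<exists>l<m. \<bar>Gm X j l - \<mu> j l\<bar> \<ge> s}"
definition "t = \<epsilon> * sqrt (sq m v) / 2"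
definition "D = {X. \<bar>(\<Sum>j<m. yt X j * ind (X (i,j) \<and> X (i,j))) - (\<Sum>j<m. yt X j * (u i * v j))\<bar> \<ge> t}"

lemma h1: "h \<ge> 1" using m1 mn n by simp
lemma finI: "finite I" unfolding I_def by simp
lemma s0: "s \<ge> 0" unfolding s_def using eps c0 by simp

lemma pmfF: "a < n \<Longrightarrow> b < m \<Longrightarrow> pmf (F (a,b)) True = u a * v b"
proof -
  assume "a < n" "b < m"
  then have "0 \<le> u a * v b" "u a * v b \<le> 1" using u[of a] v[of b] c0 by (auto intro: mult_le_one)
  thus ?thesis unfolding F_def by simp
qed

lemma L1: "measure_pmf.prob P Bad \<le> real m ^ 2 * (2 * exp (-2 * s\<^sup>2 / real h))"
proof -
  define B where "B = (\<lambda>(j,l). {X. \<bar>Gm X j l - \<mu> j l\<bar> \<ge> s})"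
  have "Bad = (\<Union>p\<in>{..<m}\<times>{..<m}. B p)" unfolding Bad_def B_def by auto
  hence "measure_pmf.prob P Bad \<le> (\<Sum>p\<in>{..<m}\<times>{..<m}. measure_pmf.prob P (B p))"
    by (simp add: measure_pmf.finite_measure_subadditive_finite)
  also have "\<dots> \<le> (\<Sum>p\<in>{..<m}\<times>{..<m}. 2 * exp (-2 * s\<^sup>2 / real h))"
  proof (intro sum_mono)
    fix p assume "p \<in> {..<m}\<times>{..<m}"
    then obtain j l where p: "p = (j,l)" "j < m" "l < m" by auto
    have "measure_pmf.prob (Pi_pmf I False F)
     {X. \<bar>(\<Sum>k\<in>{..<h}. 1 * ind (X (os+k,j) \<and> X (os+k,l))) -
          (\<Sum>k\<in>{..<h}. 1 * measure_pmf.prob (Pi_pmf I False F) {X. X (os+k,j) \<and> X (os+k,l)})\<bar> \<ge> s}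
     \<le> 2 * exp (-2 * s\<^sup>2 / (\<Sum>k\<in>{..<h}. (1::real)\<^sup>2))"
      apply (rule hoeff_pi[OF finI])
      using p os h1 s0 by (auto simp: I_def)
    thus "measure_pmf.prob P (B p) \<le> 2 * exp (-2 * s\<^sup>2 / real h)"
      using p by (simp add: B_def Gm_def \<mu>_def P_def)
  qed
  also have "\<dots> = real m ^ 2 * (2 * exp (-2 * s\<^sup>2 / real h))" by (simp add: power2_eq_square)
  finally show ?thesis .
qed

lemma L2: "measure_pmf.prob P D \<le> 2 * exp (-2 * t\<^sup>2)"
proof -
  define R where "R = I - Oth"
  define mrg where "mrg = (\<lambda>(f::nat\<times>nat\<Rightarrow>bool, g::nat\<times>nat\<Rightarrow>bool) x. if x \<in> Oth then f x else g x)"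
  have OI: "Oth \<subseteq> I" using os unfolding Oth_def I_def by auto
  have "P = Pi_pmf (Oth \<union> R) False F" unfolding P_def R_def using OI by (simp add: Un_absorb1)
  also have "\<dots> = map_pmf mrg (pair_pmf (Pi_pmf Oth False F) (Pi_pmf R False F))"
    unfolding mrg_def by (rule Pi_pmf_union) (auto simp: R_def Oth_def I_def)
  finally have Peq: "P = map_pmf mrg (pair_pmf (Pi_pmf Oth False F) (Pi_pmf R False F))" .
  define yf where "yf f = sel (blk (\<lambda>x. if x \<in> Oth then f x else False))" for f :: "nat\<times>nat \<Rightarrow> bool"
  have iR: "(i,j) \<in> R" if "j < m" for j using that i unfolding R_def I_def Oth_def by auto
  have iO: "(i,j) \<notin> Oth" for j using i unfolding Oth_def by auto
  have pre: "mrg -` D = {(f,g). \<bar>(\<Sum>j<m. yf f j * ind (g (i,j) \<and> g (i,j))) - (\<Sum>j<m. yf f j * (u i * v j))\<bar> \<ge> t}"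
  proof -
    have "yt (mrg (f,g)) = yf f" for f g
    proof -
      have "(\<lambda>x. if x \<in> Oth then mrg (f,g) x else False) = (\<lambda>x. if x \<in> Oth then f x else False)"
        unfolding mrg_def by auto
      thus ?thesis unfolding yt_def yf_def by simp
    qed
    moreover have "mrg (f,g) (i,j) = g (i,j)" for f g j unfolding mrg_def using iO by simp
    ultimately show ?thesis unfolding D_def by auto
  qed
  have "measure_pmf.prob P D = measure_pmf.prob (pair_pmf (Pi_pmf Oth False F) (Pi_pmf R False F)) (mrg -` D)"
    unfolding Peq by simp
  also have "\<dots> \<le> 2 * exp (-2 * t\<^sup>2)"
  proof (rule prob_pair_le)
    fix f
    define w where "w = yf f"
    have sw: "sq m w = 1" unfolding w_def yf_def using leading_rsv_D(1)[OF sel] .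
    have finR: "finite R" unfolding R_def using finI by simp
    have t0: "t \<ge> 0" unfolding t_def using eps sq_nonneg[of m v] by simp
    have H1: "measure_pmf.prob (Pi_pmf R False F)
     {X. \<bar>(\<Sum>k\<in>{..<m}. w k * ind (X (i,k) \<and> X (i,k))) -
          (\<Sum>k\<in>{..<m}. w k * measure_pmf.prob (Pi_pmf R False F) {X. X (i,k) \<and> X (i,k)})\<bar> \<ge> t}
     \<le> 2 * exp (-2 * t\<^sup>2 / (\<Sum>k\<in>{..<m}. (w k)\<^sup>2))"
      apply (rule hoeff_pi[OF finR])
      using iR sw t0 by (auto simp: sq_def)
    have H2: "measure_pmf.prob (Pi_pmf R False F) {X. X (i,k) \<and> X (i,k)} = u i * v k" if "k < m" for k
      using prob_pair_coords[OF finR iR[OF that] iR[OF that]] pmfF[OF i(1) that] by simp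
    show "measure_pmf.prob (Pi_pmf R False F) {g. (f, g) \<in> mrg -` D} \<le> 2 * exp (-2 * t\<^sup>2)"
    proof -
      have sw': "(\<Sum>k<m. (yf f k)\<^sup>2) = 1" using sw unfolding w_def sq_def .
      show ?thesis using H1 H2 unfolding pre w_def using sw' by simp
    qed
  qed
  finally show ?thesis .
qed

end



lemma arith_K:
  fixes U V c \<epsilon> s :: real and h m :: nat
  assumes c0: "c > 0" and hU: "U \<ge> real h * c\<^sup>2" and hV: "V \<ge> real m * c\<^sup>2" and h1: "h \<ge> 1"
    and sdef: "s = \<epsilon> * real h * c^4 / 8" and reg: "4 \<le> real m * \<epsilon> * c^4" and eps: "0 < \<epsilon>" "\<epsilon> < 1"
  shows "U * V - real h - 2 * real m * s > 0"
proof -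
  have hc: "real h * c\<^sup>2 \<ge> 0" by simp
  have U0: "U \<ge> 0" using hU hc by linarith
  have "U * V \<ge> (real h * c\<^sup>2) * (real m * c\<^sup>2)"
    by (intro mult_mono hU hV U0) simp
  hence UV: "U * V \<ge> real h * (real m * c^4)" by (simp add: power2_eq_square power4_eq_xxxx mult_ac)
  define z where "z = real m * c^4"
  have z0: "z \<ge> 0" unfolding z_def by simp
  have rz: "real m * \<epsilon> * c^4 = \<epsilon> * z" unfolding z_def by simp
  have "\<epsilon> * z \<le> 1 * z" by (intro mult_right_mono z0) (use eps in simp)
  hence mc: "z \<ge> 4" using reg rz by simp
  have "\<epsilon> * z < 1 * z" by (intro mult_strict_right_mono) (use eps mc in auto)
  hence lt: "1 + \<epsilon> * z / 4 < z" using mc by linarith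
  have "real h + 2 * real m * s = real h * (1 + \<epsilon> * z / 4)" unfolding sdef z_def by (simp add: algebra_simps)
  also have "\<dots> < real h * z" using lt h1 by simp
  finally show ?thesis using UV unfolding z_def by linarith
qed

lemma arith_cos:
  fixes U V a c \<epsilon> s :: real and h m :: nat
  assumes c0: "c > 0" and hU: "U \<ge> real h * c\<^sup>2" and hV: "V \<ge> real m * c\<^sup>2" and h1: "h \<ge> 1" and m1: "m \<ge> 1"
    and cos: "U * a\<^sup>2 \<ge> U * V - real h - 2 * real m * s"
    and sdef: "s = \<epsilon> * real h * c^4 / 8" and reg: "4 \<le> real m * \<epsilon> * c^4"
    and a0: "a \<ge> 0" and aV: "a\<^sup>2 \<le> V" and eps: "0 < \<epsilon>" "\<epsilon> < 1"
  shows "1 - a / sqrt V \<le> \<epsilon> / 2" "a / sqrt V \<le> 1"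
proof -
  have cp: "c\<^sup>2 > 0" using c0 by simp
  have "real m * c\<^sup>2 \<ge> 1 * c\<^sup>2" by (intro mult_right_mono) (use m1 in auto)
  hence V0: "V > 0" using hV cp by linarith
  have "real h * c\<^sup>2 \<ge> 1 * c\<^sup>2" by (intro mult_right_mono) (use h1 in auto)
  hence U0: "U > 0" using hU cp by linarith
  have UV: "U * V \<ge> real h * (real m * c^4)"
  proof -
    have "U * V \<ge> (real h * c\<^sup>2) * (real m * c\<^sup>2)"
      by (intro mult_mono hU hV) (use U0 in auto)
    thus ?thesis by (simp add: power2_eq_square power4_eq_xxxx mult_ac)
  qed
  have hmc: "real h * (real m * c^4) > 0" using h1 m1 c0 by simp
  define r where "r = a / sqrt V"
  have r2: "r\<^sup>2 = a\<^sup>2 / V" unfolding r_def using V0 by (simp add: power_divide)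
  have r0: "r \<ge> 0" unfolding r_def using a0 V0 by simp
  have r1: "r \<le> 1"
  proof -
    have "r\<^sup>2 \<le> 1" unfolding r2 using aV V0 by simp
    thus ?thesis using r0 by (simp add: power_le_one_iff abs_le_iff power2_le_iff_abs_le)
  qed
  define N where "N = real h + 2 * real m * s"
  have num0: "N \<ge> 0" unfolding N_def sdef using eps c0 by simp
  have f1: "1 - a\<^sup>2 / V \<le> N / (U * V)"
  proof -
    have "(1 - a\<^sup>2 / V) * (U * V) = U * V - U * a\<^sup>2" using V0 by (simp add: field_simps)
    also have "\<dots> \<le> N" using cos unfolding N_def by linarith
    finally show ?thesis using U0 V0 by (simp add: le_divide_eq)
  qed
  have f2: "N / (U * V) \<le> N / (real h * (real m * c^4))"
    by (intro divide_left_mono num0 UV) (use hmc U0 V0 in \<open>auto intro!: mult_pos_pos\<close>)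
  have f3: "N / (real h * (real m * c^4)) = 1 / (real m * c^4) + \<epsilon> / 4"
  proof -
    have "N = real h * (1 + real m * c^4 * (\<epsilon> / 4))" unfolding N_def sdef by (simp add: field_simps)
    hence "N / (real h * (real m * c^4)) = (1 + real m * c^4 * (\<epsilon> / 4)) / (real m * c^4)"
      using h1 by simp
    also have "\<dots> = 1 / (real m * c^4) + \<epsilon> / 4" using m1 c0 by (simp add: add_divide_distrib)
    finally show ?thesis .
  qed
  have f4: "1 / (real m * c^4) \<le> \<epsilon> / 4"
  proof -
    have "4 \<le> \<epsilon> * (real m * c^4)" using reg by (simp add: mult_ac)
    moreover have "real m * c^4 > 0" using m1 c0 by simp
    ultimately show ?thesis using eps by (simp add: divide_le_eq mult_ac)
  qed
  have g1: "N / (U * V) \<le> 1 / (real m * c^4) + \<epsilon> / 4" using f2 f3 by simp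
  have g2: "N / (U * V) \<le> \<epsilon> / 2" using g1 f4 by linarith
  have g3: "1 - a\<^sup>2 / V \<le> \<epsilon> / 2" using f1 g2 by (rule order_trans)
  have "a\<^sup>2 / V \<ge> 1 - \<epsilon> / 2" using g3 by linarith
  hence "r\<^sup>2 \<ge> 1 - \<epsilon> / 2" using r2 by simp
  moreover have "1 - r \<le> 1 - r\<^sup>2" using r0 r1 by (simp add: power2_eq_square mult_left_le)
  ultimately show "1 - a / sqrt V \<le> \<epsilon> / 2" unfolding r_def[symmetric] by linarith
  show "a / sqrt V \<le> 1" using r1 r_def by simp
qed



lemma tri_aux: "\<bar>x + y\<bar> \<le> \<bar>x\<bar> + \<bar>y\<bar> \<Longrightarrow> \<bar>x\<bar> = p \<Longrightarrow> \<bar>y\<bar> \<le> (q::real) \<Longrightarrow> \<bar>x+y\<bar> \<le> p + q"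
  by linarith

context setting begin

definition "Ev = {X. \<bar>(\<Sum>j<m. to_real_mat X i j * yy X j) / (vnorm m (yy X) * vnorm m v) - u i\<bar> > \<epsilon>}"

lemma Vpos: "sq m v > 0"
proof -
  have "(v 0)\<^sup>2 \<le> sq m v" unfolding sq_def by (rule member_le_sum) (use m1 in auto)
  moreover have "v 0 > 0" using v[of 0] m1 c0 by auto
  ultimately show ?thesis by (meson less_le_trans zero_less_power)
qed

lemma Vlb: "sq m v \<ge> real m * c\<^sup>2"
proof -
  have "(\<Sum>j<m. c\<^sup>2) \<le> sq m v" unfolding sq_def
    by (intro sum_mono power_mono) (use v c0 in auto)
  thus ?thesis by simp
qed

lemma gram_X:
  assumes "X \<notin> Bad"
  shows "gram h m (blk X) (\<lambda>k. u (os+k)) v s"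
proof
  fix j l assume jl: "j < m" "l < m"
  have e1: "(\<Sum>k<h. blk X k j * blk X k l) = Gm X j l"
    unfolding blk_def Gm_def to_real_mat_def ind_def by (intro sum.cong) auto
  have e2: "\<mu> j l = (\<Sum>k<h. if j = l then u (os+k) * v j else u (os+k) * v j * (u (os+k) * v l))"
    unfolding \<mu>_def P_def
  proof (intro sum.cong refl)
    fix k assume "k \<in> {..<h}"
    hence k: "os + k < n" using os by auto
    have m1: "(os+k,j) \<in> I" "(os+k,l) \<in> I" using k jl unfolding I_def by auto
    show "measure_pmf.prob (Pi_pmf I False F) {X. X (os + k, j) \<and> X (os + k, l)} =
         (if j = l then u (os + k) * v j else u (os + k) * v j * (u (os + k) * v l))"
      unfolding prob_pair_coords[OF finI m1] using pmfF[OF k jl(1)] pmfF[OF k jl(2)] by auto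
  qed
  show "\<bar>(\<Sum>k<h. blk X k j * blk X k l) - (\<Sum>k<h. if j = l then u (os+k) * v j else u (os+k) * v j * (u (os+k) * v l))\<bar> \<le> s"
    using assms jl unfolding e1 e2[symmetric] Bad_def by force
next
  show "0 \<le> s" by (rule s0)
next
  fix k j assume kj: "k < h" "j < m"
  hence "os + k < n" using os by auto
  thus "0 \<le> u (os + k) * v j \<and> u (os + k) * v j \<le> 1"
    using u[of "os+k"] v[of j] kj c0 by (auto intro: mult_le_one)
next
  show "0 < sq m v" by (rule Vpos)
qed

lemma L3: "Ev \<subseteq> Bad \<union> D"
proof
  fix X assume XE: "X \<in> Ev"
  show "X \<in> Bad \<union> D"
  proof (cases "X \<in> Bad")
    case True thus ?thesis by simp
  next
    case False
    interpret Gr: gram h m "blk X" "\<lambda>k. u (os+k)" v s by (rule gram_X[OF False])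
    define y where "y = yy X"
    define V where "V = sq m v"
    have ly: "leading_rsv h m (blk X) v y" unfolding y_def yy_def by (rule sel)
    have lt: "leading_rsv h m (blk X) v (yt X)"
    proof -
      have "leading_rsv h m (blk (\<lambda>x. if x \<in> Oth then X x else False)) v (yt X)" unfolding yt_def by (rule sel)
      moreover have "blk (\<lambda>x. if x \<in> Oth then X x else False) k j = blk X k j" if "k < h" "j < m" for k j
        using that unfolding blk_def Oth_def to_real_mat_def by auto
      ultimately show ?thesis using leading_rsv_cong[of h m "blk (\<lambda>x. if x \<in> Oth then X x else False)" "blk X" v "yt X"] by simp
    qed
    have Ub: "Gr.U \<ge> real h * c\<^sup>2"
    proof -
      have "(\<Sum>k<h. c\<^sup>2) \<le> Gr.U" unfolding Gr.U_def
        by (intro sum_mono power_mono) (use u os c0 in auto)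
      thus ?thesis by simp
    qed
    have K: "Gr.U * sq m v - real h - 2 * real m * s > 0"
      by (rule arith_K[OF c0 Ub Vlb h1 s_def reg eps])
    have yeq: "y j = yt X j" if "j < m" for j
      using Gr.uniq[OF K ly lt that] .
    note ld = leading_rsv_D[OF ly]
    define a where "a = vinner m v y"
    have cos: "Gr.U * a\<^sup>2 \<ge> Gr.U * V - real h - 2 * real m * s"
      unfolding a_def V_def by (rule Gr.cos_lb[OF ld(1,2)])
    have aV: "a\<^sup>2 \<le> V"
    proof -
      have "a\<^sup>2 \<le> sq m v * sq m y" unfolding a_def vinner_def sq_def by (rule Cauchy_Schwarz_ineq_sum)
      thus ?thesis using ld(1) V_def by simp
    qed
    have ac: "1 - a / sqrt V \<le> \<epsilon> / 2" "a / sqrt V \<le> 1"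
    proof -
      have a0: "a \<ge> 0" using ld(3) unfolding a_def .
      have VV: "V \<ge> real m * c\<^sup>2" unfolding V_def by (rule Vlb)
      show "1 - a / sqrt V \<le> \<epsilon> / 2" by (rule arith_cos(1)[OF c0 Ub VV h1 m1 cos s_def reg a0 aV eps])
      show "a / sqrt V \<le> 1" by (rule arith_cos(2)[OF c0 Ub VV h1 m1 cos s_def reg a0 aV eps])
    qed
    have V0: "V > 0" unfolding V_def by (rule Vpos)
    have vny: "vnorm m y = 1" using ld(1) unfolding vnorm_def sq_def by simp
    have vnv: "vnorm m v = sqrt V" unfolding vnorm_def V_def sq_def ..
    define S where "S = (\<Sum>j<m. to_real_mat X i j * y j)"
    define dev where "dev = (\<Sum>j<m. yt X j * ind (X (i,j) \<and> X (i,j))) - (\<Sum>j<m. yt X j * (u i * v j))"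
    have devS: "dev = S - u i * a"
    proof -
      have "(\<Sum>j<m. yt X j * ind (X (i,j) \<and> X (i,j))) = S"
        unfolding S_def by (intro sum.cong refl) (auto simp: yeq to_real_mat_def ind_def)
      moreover have "(\<Sum>j<m. yt X j * (u i * v j)) = u i * a"
        unfolding a_def vinner_def by (auto simp: sum_distrib_left yeq mult_ac intro!: sum.cong)
      ultimately show ?thesis unfolding dev_def by simp
    qed
    have ui: "0 \<le> u i" "u i \<le> 1" using u[OF i(1)] c0 by auto
    have sV: "sqrt V > 0" using V0 by simp
    have eqq: "S / (vnorm m y * vnorm m v) - u i = dev / sqrt V + u i * (a / sqrt V - 1)"
      unfolding vny vnv devS by (simp add: diff_divide_distrib right_diff_distrib)
    have fa: "\<bar>u i * (a / sqrt V - 1)\<bar> \<le> \<epsilon> / 2"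
    proof -
      have "\<bar>u i * (a / sqrt V - 1)\<bar> = u i * (1 - a / sqrt V)" using ui ac by (simp add: abs_mult)
      also have "\<dots> \<le> 1 * (\<epsilon> / 2)" by (intro mult_mono) (use ui ac in auto)
      finally show ?thesis by simp
    qed
    have fb: "\<bar>dev / sqrt V\<bar> = \<bar>dev\<bar> / sqrt V" using sV by simp
    have b1: "\<bar>S / (vnorm m y * vnorm m v) - u i\<bar> \<le> \<bar>dev\<bar> / sqrt V + \<epsilon> / 2"
      unfolding eqq by (rule tri_aux[OF abs_triangle_ineq fb fa])
    have "\<bar>S / (vnorm m y * vnorm m v) - u i\<bar> > \<epsilon>" using XE unfolding Ev_def S_def y_def by simp
    hence "\<bar>dev\<bar> / sqrt V > \<epsilon> / 2" using b1 by linarith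
    hence "\<bar>dev\<bar> > \<epsilon> / 2 * sqrt V" using sV by (simp add: pos_less_divide_eq)
    hence "\<bar>dev\<bar> \<ge> t" unfolding t_def V_def by simp
    thus ?thesis unfolding D_def dev_def by simp
  qed
qed

end



context setting begin

lemma main_bound:
  "measure_pmf.prob P Ev \<le> real m ^ 2 * (2 * exp (-2 * s\<^sup>2 / real h)) + 2 * exp (-2 * t\<^sup>2)"
proof -
  have "measure_pmf.prob P Ev \<le> measure_pmf.prob P (Bad \<union> D)"
    by (intro measure_pmf.finite_measure_mono L3) auto
  also have "\<dots> \<le> measure_pmf.prob P Bad + measure_pmf.prob P D"
    by (rule measure_Un_le) auto
  also have "\<dots> \<le> real m ^ 2 * (2 * exp (-2 * s\<^sup>2 / real h)) + 2 * exp (-2 * t\<^sup>2)"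
    by (intro add_mono L1 L2)
  finally show ?thesis .
qed

lemma exp1: "2 * s\<^sup>2 / real h = \<epsilon>\<^sup>2 * real h * c^8 / 32"
  unfolding s_def using h1 by (simp add: power2_eq_square field_simps)

lemma exp2: "2 * t\<^sup>2 \<ge> \<epsilon>\<^sup>2 * real m * c\<^sup>2 / 2"
proof -
  have "2 * t\<^sup>2 = \<epsilon>\<^sup>2 * sq m v / 2" unfolding t_def using sq_nonneg[of m v]
    by (simp add: power_mult_distrib power_divide)
  moreover have "\<epsilon>\<^sup>2 * sq m v \<ge> \<epsilon>\<^sup>2 * (real m * c\<^sup>2)" by (intro mult_left_mono Vlb) simp
  ultimately show ?thesis by simp
qed

end



lemma C1_bounds:
  fixes c :: real assumes c: "0 < c" "c < 1"
  shows "C1 c > 0" "C1 c \<le> c^10 / 576"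
proof -
  have C3: "C3 c \<ge> 4 / c^4" unfolding C3_def by simp
  have C3p: "C3 c > 0" using C3 c by (smt (verit) divide_pos_pos zero_less_power)
  define b where "b = 6 * C3 c / c"
  have bp: "b > 0" unfolding b_def using C3p c by simp
  have pw: "b powr (-2) = 1 / b\<^sup>2" using bp by (simp add: powr_minus powr_realpow divide_inverse)
  have "b \<ge> 24 / c^5"
  proof -
    have "24 / c^4 \<le> 6 * C3 c" using C3 by simp
    hence "(24 / c^4) / c \<le> 6 * C3 c / c" by (rule divide_right_mono) (use c in auto)
    moreover have "24 / c^5 = (24 / c^4) / c" by (simp add: divide_divide_eq_left power_Suc2[of c 4, simplified])
    ultimately show ?thesis unfolding b_def by simp
  qed
  hence "b\<^sup>2 \<ge> (24 / c^5)\<^sup>2" by (intro power_mono) (use c in auto)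
  hence "1 / b\<^sup>2 \<le> 1 / (24 / c^5)\<^sup>2" by (intro divide_left_mono) (use c bp in auto)
  also have "1 / (24 / c^5)\<^sup>2 = c^10 / 576" by (simp add: power_divide power_mult[symmetric] field_simps)
  finally have "b powr (-2) \<le> c^10 / 576" using pw by simp
  thus "C1 c \<le> c^10 / 576" unfolding C1_def b_def by simp
  have "C4 c > 0" unfolding C4_def C2_def using c by simp
  moreover have "b powr (-2) > 0" using bp by simp
  ultimately show "C1 c > 0" unfolding C1_def b_def by simp
qed

lemma final_arith:
  fixes x A B :: real and m n :: nat
  assumes ex: "exp x > 3 * real n" and n1: "n \<ge> 1" and mn: "m \<le> n" and A: "A \<ge> 3 * x" and B: "B \<ge> x"
  shows "real m ^ 2 * (2 * exp (-A)) + 2 * exp (-B) \<le> 3 * real n * exp (-x)"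
proof -
  define y where "y = exp (-x)"
  have y0: "y > 0" unfolding y_def by simp
  have ny: "3 * real n * y < 1" using ex unfolding y_def by (simp add: exp_minus field_simps)
  have ny0: "real n * y \<ge> 0" using y0 by simp
  have "(real n * y)\<^sup>2 \<le> (1/3)\<^sup>2" by (intro power_mono) (use ny ny0 in auto)
  hence nn: "real n ^ 2 * y\<^sup>2 \<le> 1/9" by (simp add: power_mult_distrib power_divide)
  have "real m ^ 2 \<le> real n ^ 2" using mn by (simp add: power_mono)
  hence my: "real m ^ 2 * y\<^sup>2 \<le> 1/9" using nn y0 by (smt (verit) mult_right_mono zero_le_power2)
  have y3: "y ^ 3 = exp (-(3*x))" unfolding y_def using exp_of_nat_mult[of 3 "-x"] by simp
  have eA: "exp (-A) \<le> y ^ 3" unfolding y3 using A by simp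
  have eB: "exp (-B) \<le> y" unfolding y_def using B by simp
  have "real m ^ 2 * (2 * exp (-A)) \<le> real m ^ 2 * (2 * y ^ 3)"
    by (intro mult_left_mono eA) auto
  also have "\<dots> = 2 * (real m ^ 2 * y\<^sup>2) * y" by (simp add: power2_eq_square power3_eq_cube)
  also have "\<dots> \<le> 2 * (1/9) * y" by (intro mult_right_mono mult_left_mono my) (use y0 in auto)
  finally have t1: "real m ^ 2 * (2 * exp (-A)) \<le> 2 / 9 * y" by simp
  have "3 * y \<le> 3 * real n * y" using n1 y0 by simp
  have "real m ^ 2 * (2 * exp (-A)) + 2 * exp (-B) \<le> 2 / 9 * y + 2 * y"
    by (rule add_mono[OF t1]) (use eB in simp)
  also have "\<dots> \<le> 3 * y" using y0 by simp
  also have "\<dots> \<le> 3 * real n * y" using n1 y0 by simp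
  finally show ?thesis unfolding y_def .
qed



lemma exps:
  fixes c \<epsilon> K :: real and m h :: nat
  assumes c: "0 < c" "c < 1" and eps: "0 < \<epsilon>" "\<epsilon> < 1" and mh: "m \<le> 2 * h"
    and K: "0 < K" "K \<le> c^10 / 576"
  shows "3 * (K * real m * \<epsilon>\<^sup>2) \<le> \<epsilon>\<^sup>2 * real h * c^8 / 32"
    and "K * real m * \<epsilon>\<^sup>2 \<le> \<epsilon>\<^sup>2 * real m * c\<^sup>2 / 2"
proof -
  define z where "z = real m * \<epsilon>\<^sup>2"
  have z0: "z \<ge> 0" unfolding z_def by simp
  have p1: "K * real m * \<epsilon>\<^sup>2 \<le> c^10 / 576 * z" unfolding z_def
    using mult_right_mono[OF K(2) z0] by (simp add: z_def mult_ac)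
  have c108: "c^10 \<le> c^8" by (rule power_decreasing) (use c in auto)
  have c82: "c^8 \<le> c^2" by (rule power_decreasing) (use c in auto)
  have zh: "z \<le> 2 * real h * \<epsilon>\<^sup>2" unfolding z_def
    by (intro mult_right_mono) (use mh in auto)
  have "c^10 / 576 * z \<le> c^8 / 576 * z" by (intro mult_right_mono z0) (use c108 in simp)
  also have "\<dots> \<le> c^8 / 576 * (2 * real h * \<epsilon>\<^sup>2)" by (intro mult_left_mono zh) (use c in simp)
  finally have "K * real m * \<epsilon>\<^sup>2 \<le> c^8 / 576 * (2 * real h * \<epsilon>\<^sup>2)" using p1 by linarith
  hence "3 * (K * real m * \<epsilon>\<^sup>2) \<le> 3 * (c^8 / 576 * (2 * real h * \<epsilon>\<^sup>2))" by linarith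
  also have "\<dots> = \<epsilon>\<^sup>2 * real h * c^8 / 96" by simp
  also have "\<dots> \<le> \<epsilon>\<^sup>2 * real h * c^8 / 32" by simp
  finally show "3 * (K * real m * \<epsilon>\<^sup>2) \<le> \<epsilon>\<^sup>2 * real h * c^8 / 32" .
  have "c^10 / 576 * z \<le> c^2 / 2 * z" by (intro mult_right_mono z0) (use c108 c82 c in \<open>simp, smt (verit) zero_le_power2\<close>)
  thus "K * real m * \<epsilon>\<^sup>2 \<le> \<epsilon>\<^sup>2 * real m * c\<^sup>2 / 2" using p1 unfolding z_def by (simp add: mult_ac)
qed

context setting begin
lemma final:
  assumes ex: "exp x > 3 * real n" and x1: "3 * x \<le> \<epsilon>\<^sup>2 * real h * c^8 / 32" and x2: "x \<le> \<epsilon>\<^sup>2 * real m * c\<^sup>2 / 2"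
  shows "measure_pmf.prob P Ev \<le> 3 * real n * exp (-x)"
proof -
  have n1: "n \<ge> 1" using i by simp
  have A: "2 * s\<^sup>2 / real h \<ge> 3 * x" using exp1 x1 by simp
  have B: "2 * t\<^sup>2 \<ge> x" using exp2 x2 by linarith
  have "measure_pmf.prob P Ev \<le> real m ^ 2 * (2 * exp (-(2 * s\<^sup>2 / real h))) + 2 * exp (-(2 * t\<^sup>2))"
    using main_bound by simp
  also have "\<dots> \<le> 3 * real n * exp (-x)"
    by (rule final_arith[OF ex n1 mn A B])
  finally show ?thesis .
qed
end

theorem theorem1:
  fixes c C :: real and n m :: nat and u v :: "nat \<Rightarrow> real"
    and selA selB :: "(nat \<Rightarrow> nat \<Rightarrow> real) \<Rightarrow> (nat \<Rightarrow> real)"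
    and i :: nat and \<epsilon> :: real
  assumes "0 < c" "c < C" "C < 1"
    and "even n" "m \<le> n"
    and "\<forall>k<n. u k \<in> {c..C}" and "\<forall>j<m. v j \<in> {c..C}"
    and "\<forall>M. leading_rsv (n div 2) m M v (selA M)"
    and "\<forall>M. leading_rsv (n div 2) m M v (selB M)"
    and "i < n" and "0 < \<epsilon>" "\<epsilon> < 1"
  shows "measure_pmf.prob (rank_one_model n m u v)
           {X. \<bar>split_spectral n m selA selB (vnorm m v) X i - u i\<bar> > \<epsilon>}
         \<le> 3 * real n * exp (- C1 c * real m * \<epsilon>\<^sup>2)"
proof -
  note a = assms
  define h where "h = n div 2"
  have n2: "n = 2 * h" unfolding h_def using a(4) by simp
  have m1: "m \<ge> 1"
  proof (rule ccontr)
    assume "\<not> m \<ge> 1"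
    hence "m = 0" by simp
    thus False using a(8) unfolding leading_rsv_def vnorm_def by simp
  qed
  have n1: "n \<ge> 1" using a(10) by simp
  have c1: "c < 1" using a(2,3) by simp
  have Cb: "C1 c > 0" "C1 c \<le> c^10 / 576" using C1_bounds[OF a(1) c1] by auto
  define x where "x = C1 c * real m * \<epsilon>\<^sup>2"
  have rhs: "3 * real n * exp (- C1 c * real m * \<epsilon>\<^sup>2) = 3 * real n * exp (-x)" unfolding x_def by simp
  show ?thesis
  proof (cases "3 * real n * exp (-x) \<ge> 1")
    case True
    thus ?thesis unfolding rhs using measure_pmf.prob_le_1 order_trans by blast
  next
    case False
    hence ex: "exp x > 3 * real n" by (simp add: exp_minus field_simps)
    have x1: "x > 1"
    proof (rule ccontr)
      assume "\<not> x > 1"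
      hence "exp x \<le> exp 1" by simp
      also have "\<dots> < 272/100" by (rule e_less_272)
      finally show False using ex n1 by simp
    qed
    have reg: "4 \<le> real m * \<epsilon> * c^4"
    proof -
      have "1 < C1 c * real m * \<epsilon>\<^sup>2" using x1 x_def by simp
      also have "\<dots> \<le> c^10 / 576 * (real m * \<epsilon>\<^sup>2)"
        using mult_right_mono[OF Cb(2), of "real m * \<epsilon>\<^sup>2"] by (simp add: mult_ac)
      also have "\<dots> \<le> 1 / 576 * (real m * \<epsilon> * c^4)"
      proof -
        have "c^10 \<le> c^4" by (rule power_decreasing) (use a(1) c1 in auto)
        moreover have "\<epsilon>\<^sup>2 \<le> \<epsilon>" using a(11,12) by (simp add: power2_eq_square mult_left_le)
        ultimately have "c^10 * (real m * \<epsilon>\<^sup>2) \<le> c^4 * (real m * \<epsilon>)"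
          by (intro mult_mono) (use a(1) in auto)
        thus ?thesis by (simp add: mult_ac)
      qed
      finally show ?thesis by simp
    qed
    have uu: "\<And>k. k<n \<Longrightarrow> c \<le> u k \<and> u k \<le> 1" using a(6) a(3) by fastforce
    have vv: "\<And>j. j<m \<Longrightarrow> c \<le> v j \<and> v j \<le> 1" using a(7) a(3) by fastforce
    have xb: "3 * x \<le> \<epsilon>\<^sup>2 * real h * c^8 / 32" "x \<le> \<epsilon>\<^sup>2 * real m * c\<^sup>2 / 2"
    proof -
      have mh: "m \<le> 2 * h" using a(5) n2 by simp
      show "3 * x \<le> \<epsilon>\<^sup>2 * real h * c^8 / 32" unfolding x_def by (rule exps(1)[OF a(1) c1 a(11,12) mh Cb])
      show "x \<le> \<epsilon>\<^sup>2 * real m * c\<^sup>2 / 2" unfolding x_def by (rule exps(2)[OF a(1) c1 a(11,12) mh Cb])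
    qed
    show ?thesis
    proof (cases "i < h")
      case True
      interpret S: setting n h m c u v selB h i \<epsilon>
      proof (rule setting.intro)
        show "\<And>M. leading_rsv h m M v (selB M)" using a(9) unfolding h_def by blast
      qed (use n2 m1 a(5) a(1) uu vv a(10) a(11) a(12) reg True in simp_all)
      have PP: "rank_one_model n m u v = S.P"
        unfolding rank_one_model_def S.P_def S.I_def S.F_def ..
      have EE: "{X. \<bar>split_spectral n m selA selB (vnorm m v) X i - u i\<bar> > \<epsilon>} = S.Ev"
      proof -
        have bk: "S.blk X = bot_half n X" for X unfolding S.blk_def by (simp add: bot_half_def h_def fun_eq_iff)
        have yyX: "S.yy X = selB (bot_half n X)" for X unfolding S.yy_def bk ..
        have mv: "matvec m (top_half n X) y i = (\<Sum>j<m. to_real_mat X i j * y j)" for X y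
          unfolding matvec_def top_half_def ..
        have val: "split_spectral n m selA selB (vnorm m v) X i
            = (\<Sum>j<m. to_real_mat X i j * S.yy X j) / (vnorm m (S.yy X) * vnorm m v)" for X
        proof -
          have "i < n div 2" using True h_def by simp
          thus ?thesis unfolding split_spectral_def Let_def yyX mv by simp
        qed
        show ?thesis unfolding S.Ev_def val ..
      qed
      show ?thesis unfolding PP EE rhs by (rule S.final[OF ex xb])
    next
      case False
      interpret S: setting n h m c u v selA 0 i \<epsilon>
      proof (rule setting.intro)
        show "\<And>M. leading_rsv h m M v (selA M)" using a(8) unfolding h_def by blast
      qed (use n2 m1 a(5) a(1) uu vv a(10) a(11) a(12) reg False in simp_all)
      have PP: "rank_one_model n m u v = S.P"
        unfolding rank_one_model_def S.P_def S.I_def S.F_def ..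
      have EE: "{X. \<bar>split_spectral n m selA selB (vnorm m v) X i - u i\<bar> > \<epsilon>} = S.Ev"
      proof -
        have bk: "S.blk X = top_half n X" for X unfolding S.blk_def by (simp add: top_half_def fun_eq_iff)
        have yyX: "S.yy X = selA (top_half n X)" for X unfolding S.yy_def bk ..
        have mv: "matvec m (bot_half n X) y (i - n div 2) = (\<Sum>j<m. to_real_mat X i j * y j)" for X y
          unfolding matvec_def bot_half_def using False h_def by simp
        have val: "split_spectral n m selA selB (vnorm m v) X i
            = (\<Sum>j<m. to_real_mat X i j * S.yy X j) / (vnorm m (S.yy X) * vnorm m v)" for X
        proof -
          have "\<not> i < n div 2" using False h_def by simp
          thus ?thesis unfolding split_spectral_def Let_def yyX mv by simp
        qed
        show ?thesis unfolding S.Ev_def val ..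
      qed
      show ?thesis unfolding PP EE rhs by (rule S.final[OF ex xb])
    qed
  qed
qed


end
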